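(* Let $R=\mathbb{Z}[i]$ and $\mu_4=\{1,i,-1,-i\}\subset R^\times$ (with $\iota$ the inclusion). Then: (i) $X=1+2i$ is an $\mathbb{S}[\mu_{4,+}]$-generator of $R$, i.e. every element of $R$ is uniquely a finite sum $\sum_k\alpha_kX^k$ with $\alpha_k\in\{0,1,i,-1,-i\}$; (ii) the hold is given by $0+1=1$ and $1+1=i-iX$, $i+1=-i+X$, $-i+1=-1-iX$; (iii) the field $R_1=R/XR$ is the finite field $\mathbb{F}_5$; (iv) the projective limit $\varprojlim_mR_m$ (with $R_m=R/X^mR$) is the Witt ring $W(\mathbb{F}_5)=\mathbb{Z}_5$, and $R_m$ is the quotient of $W(\mathbb{F}_5)$ by $5^mW(\mathbb{F}_5)$.
   Context: The hold records, for each $\xi\in\mu_4$, the unique representation of $\xi+1$ as a finite sum $\sum_k\alpha_kX^k$ with $\alpha_k\in\mu_4\cup\{0\}$ (for $\xi=-1$ this is the empty sum). $W(\mathbb{F}_5)=\mathbb{Z}_5$ is the ring of $5$-adic integers. *)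

theory Defs
  imports Complex_Main "HOL-Algebra.Algebra"
begin

definition gauss_ring :: "complex ring" where
  "gauss_ring = \<lparr>carrier = {z. Re z \<in> \<int> \<and> Im z \<in> \<int>}, monoid.mult = (*), one = 1, ring.zero = 0, ring.add = (+)\<rparr>"

definition mu4_0 :: "complex set" where
  "mu4_0 = {0, 1, imaginary_unit, -1, -imaginary_unit}"

definition digit_rep :: "complex \<Rightarrow> (nat \<Rightarrow> complex) \<Rightarrow> complex \<Rightarrow> bool" where
  "digit_rep b a z \<longleftrightarrow> (\<forall>k. a k \<in> mu4_0) \<and> finite {k. a k \<noteq> 0}
      \<and> z = sum (\<lambda>k. a k * b ^ k) {k. a k \<noteq> 0}"

definition digits :: "complex \<Rightarrow> complex \<Rightarrow> (nat \<Rightarrow> complex)" where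
  "digits b z = (THE a. digit_rep b a z)"

text \<open>Projective limit of the tower of quotient rings A/I(m), with the natural projections
  A/I(m+1) -> A/I(m) (for a decreasing chain of ideals a coset of I(m+1) maps to the unique
  coset of I(m) containing it).\<close>
definition invlim :: "('a, 'b) ring_scheme \<Rightarrow> (nat \<Rightarrow> 'a set) \<Rightarrow> (nat \<Rightarrow> 'a set) ring" where
  "invlim A I = \<lparr>carrier = {f. \<forall>m. f m \<in> carrier (A Quot I m) \<and> f (Suc m) \<subseteq> f m},
      monoid.mult = (\<lambda>f g m. f m \<otimes>\<^bsub>A Quot I m\<^esub> g m),
      one = (\<lambda>m. \<one>\<^bsub>A Quot I m\<^esub>),
      ring.zero = (\<lambda>m. \<zero>\<^bsub>A Quot I m\<^esub>),
      ring.add = (\<lambda>f g m. f m \<oplus>\<^bsub>A Quot I m\<^esub> g m)\<rparr>"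

text \<open>The ring of 5-adic integers Z_5 = W(F_5) = lim Z/5^m Z.\<close>
definition Z5 :: "(nat \<Rightarrow> int set) ring" where
  "Z5 = invlim \<Z> (\<lambda>m. PIdl\<^bsub>\<Z>\<^esub> (5 ^ m))"

definition Z5_of_int :: "int \<Rightarrow> (nat \<Rightarrow> int set)" where
  "Z5_of_int k = (\<lambda>m. PIdl\<^bsub>\<Z>\<^esub> (5 ^ m) +>\<^bsub>\<Z>\<^esub> k)"

definition R_m :: "complex \<Rightarrow> nat \<Rightarrow> complex set ring" where
  "R_m b m = gauss_ring Quot (PIdl\<^bsub>gauss_ring\<^esub> (b ^ m))"

end

theory Submission
  imports Defs
begin

context ideal
begin

lemma cos_mem: "y \<in> carrier R \<Longrightarrow> x \<in> carrier R \<Longrightarrow> y \<in> I +> x \<longleftrightarrow> y \<ominus> x \<in> I"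
  using a_rcos_module_minus[OF ring_axioms] by blast

lemma cos_eq: "x \<in> carrier R \<Longrightarrow> y \<in> carrier R \<Longrightarrow> I +> x = I +> y \<longleftrightarrow> x \<ominus> y \<in> I"
  by (metis a_rcos_self a_repr_independence' cos_mem)

lemma quot_carrier: "C \<in> carrier (R Quot I) \<longleftrightarrow> (\<exists>x\<in>carrier R. C = I +> x)"
  by (auto simp: FactRing_def A_RCOSETS_def')

lemma quot_add: "x \<in> carrier R \<Longrightarrow> y \<in> carrier R \<Longrightarrow> (I +> x) \<oplus>\<^bsub>R Quot I\<^esub> (I +> y) = I +> (x \<oplus> y)"
  by (simp add: FactRing_def a_rcos_sum)

lemma quot_mult: "x \<in> carrier R \<Longrightarrow> y \<in> carrier R \<Longrightarrow> (I +> x) \<otimes>\<^bsub>R Quot I\<^esub> (I +> y) = I +> (x \<otimes> y)"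
  by (simp add: FactRing_def rcoset_mult_add)

lemma quot_one: "\<one>\<^bsub>R Quot I\<^esub> = I +> \<one>"
  by (simp add: FactRing_def)

lemma quot_zero: "\<zero>\<^bsub>R Quot I\<^esub> = I +> \<zero>"
  by (simp add: FactRing_def a_rcos_const)

end

lemma cos_sub:
  assumes "ideal I R" "ideal I' R" "I' \<subseteq> I" "x \<in> carrier R" "y \<in> carrier R"
  shows "I' +>\<^bsub>R\<^esub> x \<subseteq> I +>\<^bsub>R\<^esub> y \<longleftrightarrow> x \<ominus>\<^bsub>R\<^esub> y \<in> I"
proof -
  interpret I: ideal I R by fact
  interpret I': ideal I' R by fact
  show ?thesis
  proof
    assume "I' +>\<^bsub>R\<^esub> x \<subseteq> I +>\<^bsub>R\<^esub> y"
    then have "x \<in> I +>\<^bsub>R\<^esub> y" using I'.a_rcos_self assms by blast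
    then show "x \<ominus>\<^bsub>R\<^esub> y \<in> I" using I.cos_mem assms by blast
  next
    assume h: "x \<ominus>\<^bsub>R\<^esub> y \<in> I"
    show "I' +>\<^bsub>R\<^esub> x \<subseteq> I +>\<^bsub>R\<^esub> y"
    proof
      fix z assume z: "z \<in> I' +>\<^bsub>R\<^esub> x"
      have zc: "z \<in> carrier R" using z I.a_r_coset_subset_G[OF I'.a_subset] assms by blast
      have "z \<ominus>\<^bsub>R\<^esub> x \<in> I" using I'.cos_mem zc assms z by blast
      then have "(z \<ominus>\<^bsub>R\<^esub> x) \<oplus>\<^bsub>R\<^esub> (x \<ominus>\<^bsub>R\<^esub> y) \<in> I" using h by simp
      moreover have "(z \<ominus>\<^bsub>R\<^esub> x) \<oplus>\<^bsub>R\<^esub> (x \<ominus>\<^bsub>R\<^esub> y) = z \<ominus>\<^bsub>R\<^esub> y"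
        using zc assms by (simp add: I.ring_simprules) algebra
      ultimately show "z \<in> I +>\<^bsub>R\<^esub> y" using I.cos_mem zc assms by simp
    qed
  qed
qed


lemma invlim_carrier: "F \<in> carrier (invlim A I) \<longleftrightarrow> (\<forall>m. F m \<in> carrier (A Quot I m) \<and> F (Suc m) \<subseteq> F m)"
  by (simp add: invlim_def)
lemma invlim_add: "F \<oplus>\<^bsub>invlim A I\<^esub> G = (\<lambda>m. F m \<oplus>\<^bsub>A Quot I m\<^esub> G m)"
  by (simp add: invlim_def)
lemma invlim_mult: "F \<otimes>\<^bsub>invlim A I\<^esub> G = (\<lambda>m. F m \<otimes>\<^bsub>A Quot I m\<^esub> G m)"
  by (simp add: invlim_def)
lemma invlim_one: "\<one>\<^bsub>invlim A I\<^esub> = (\<lambda>m. \<one>\<^bsub>A Quot I m\<^esub>)"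
  by (simp add: invlim_def)
lemma invlim_zero: "\<zero>\<^bsub>invlim A I\<^esub> = (\<lambda>m. \<zero>\<^bsub>A Quot I m\<^esub>)"
  by (simp add: invlim_def)

locale tower =
  fixes A (structure) and I :: "nat \<Rightarrow> 'a set"
  assumes cr: "cring A" and idl: "\<And>m. ideal (I m) A" and dec: "\<And>m. I (Suc m) \<subseteq> I m"
begin

lemma Qcr: "cring (A Quot I m)"
  by (simp add: cr idl ideal.quotient_is_cring)

lemma step_sub:
  assumes "x \<in> carrier A" "y \<in> carrier A"
  shows "I (Suc m) +> x \<subseteq> I m +> y \<longleftrightarrow> x \<ominus> y \<in> I m"
  using cos_sub[OF idl idl dec assms] .

lemma qc: "C \<in> carrier (A Quot I m) \<longleftrightarrow> (\<exists>x\<in>carrier A. C = I m +> x)"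
  using ideal.quot_carrier[OF idl] .

lemma qadd: "x \<in> carrier A \<Longrightarrow> y \<in> carrier A \<Longrightarrow> (I m +> x) \<oplus>\<^bsub>A Quot I m\<^esub> (I m +> y) = I m +> (x \<oplus> y)"
  using ideal.quot_add[OF idl] .
lemma qmult: "x \<in> carrier A \<Longrightarrow> y \<in> carrier A \<Longrightarrow> (I m +> x) \<otimes>\<^bsub>A Quot I m\<^esub> (I m +> y) = I m +> (x \<otimes> y)"
  using ideal.quot_mult[OF idl] .
lemma qone: "\<one>\<^bsub>A Quot I m\<^esub> = I m +> \<one>"
  using ideal.quot_one[OF idl] .
lemma qzero: "\<zero>\<^bsub>A Quot I m\<^esub> = I m +> \<zero>"
  using ideal.quot_zero[OF idl] .

lemma Icarr: "I m \<subseteq> carrier A"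
  using additive_subgroup.a_subset[OF ideal.axioms(1)[OF idl]] .

lemma Iclosed: "x \<in> I m \<Longrightarrow> y \<in> I m \<Longrightarrow> x \<oplus> y \<in> I m"
  using additive_subgroup.a_closed[OF ideal.axioms(1)[OF idl]] .
lemma Iinv: "x \<in> I m \<Longrightarrow> \<ominus> x \<in> I m"
  using additive_subgroup.a_inv_closed[OF ideal.axioms(1)[OF idl]] .
lemma Ilmult: "x \<in> I m \<Longrightarrow> y \<in> carrier A \<Longrightarrow> y \<otimes> x \<in> I m"
  using ideal.I_l_closed[OF idl] .
lemma Irmult: "x \<in> I m \<Longrightarrow> y \<in> carrier A \<Longrightarrow> x \<otimes> y \<in> I m"
  using ideal.I_r_closed[OF idl] .

interpretation A: cring A by (rule cr)

lemma I0: "\<zero> \<in> I m"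
  using additive_subgroup.zero_closed[OF ideal.axioms(1)[OF idl]] .

lemma selfminus: "x \<in> carrier A \<Longrightarrow> x \<ominus> x \<in> I m"
  using I0 by (simp add: A.minus_eq A.r_neg)

lemma compat_add:
  assumes F: "F \<in> carrier (invlim A I)" and G: "G \<in> carrier (invlim A I)"
  shows "F (Suc m) \<oplus>\<^bsub>A Quot I (Suc m)\<^esub> G (Suc m) \<subseteq> F m \<oplus>\<^bsub>A Quot I m\<^esub> G m"
proof -
  obtain a' where a': "a' \<in> carrier A" "F (Suc m) = I (Suc m) +> a'" using F qc invlim_carrier by metis
  obtain a where a: "a \<in> carrier A" "F m = I m +> a" using F qc invlim_carrier by metis
  obtain b' where b': "b' \<in> carrier A" "G (Suc m) = I (Suc m) +> b'" using G qc invlim_carrier by metis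
  obtain b where b: "b \<in> carrier A" "G m = I m +> b" using G qc invlim_carrier by metis
  have h1: "a' \<ominus> a \<in> I m" using F invlim_carrier a a' step_sub by metis
  have h2: "b' \<ominus> b \<in> I m" using G invlim_carrier b b' step_sub by metis
  have "(a' \<oplus> b') \<ominus> (a \<oplus> b) = (a' \<ominus> a) \<oplus> (b' \<ominus> b)"
    using a a' b b' by algebra
  then have "(a' \<oplus> b') \<ominus> (a \<oplus> b) \<in> I m" using h1 h2 Iclosed by simp
  then show ?thesis using a a' b b' qadd step_sub by simp
qed

lemma compat_mult:
  assumes F: "F \<in> carrier (invlim A I)" and G: "G \<in> carrier (invlim A I)"
  shows "F (Suc m) \<otimes>\<^bsub>A Quot I (Suc m)\<^esub> G (Suc m) \<subseteq> F m \<otimes>\<^bsub>A Quot I m\<^esub> G m"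
proof -
  obtain a' where a': "a' \<in> carrier A" "F (Suc m) = I (Suc m) +> a'" using F qc invlim_carrier by metis
  obtain a where a: "a \<in> carrier A" "F m = I m +> a" using F qc invlim_carrier by metis
  obtain b' where b': "b' \<in> carrier A" "G (Suc m) = I (Suc m) +> b'" using G qc invlim_carrier by metis
  obtain b where b: "b \<in> carrier A" "G m = I m +> b" using G qc invlim_carrier by metis
  have h1: "a' \<ominus> a \<in> I m" using F invlim_carrier a a' step_sub by metis
  have h2: "b' \<ominus> b \<in> I m" using G invlim_carrier b b' step_sub by metis
  have "(a' \<otimes> b') \<ominus> (a \<otimes> b) = a' \<otimes> (b' \<ominus> b) \<oplus> (a' \<ominus> a) \<otimes> b"
    using a a' b b' by algebra
  moreover have "a' \<otimes> (b' \<ominus> b) \<oplus> (a' \<ominus> a) \<otimes> b \<in> I m"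
    using h1 h2 Iclosed Ilmult Irmult a' b by simp
  ultimately show ?thesis using a a' b b' qmult step_sub by simp
qed

lemma inv_exists:
  assumes F: "F \<in> carrier (invlim A I)"
  shows "\<exists>G\<in>carrier (invlim A I). G \<oplus>\<^bsub>invlim A I\<^esub> F = \<zero>\<^bsub>invlim A I\<^esub>"
proof -
  define r where "r m = (SOME x. x \<in> carrier A \<and> F m = I m +> x)" for m
  have r: "r m \<in> carrier A \<and> F m = I m +> r m" for m
    unfolding r_def by (rule someI_ex) (use F qc invlim_carrier in metis)
  define G where "G m = I m +> (\<ominus> r m)" for m
  have "G \<in> carrier (invlim A I)"
    unfolding invlim_carrier
  proof
    fix m
    have "r (Suc m) \<ominus> r m \<in> I m" using F invlim_carrier r step_sub by metis
    then have "\<ominus> (r (Suc m) \<ominus> r m) \<in> I m" by (rule Iinv)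
    moreover have "\<ominus> (r (Suc m) \<ominus> r m) = (\<ominus> r (Suc m)) \<ominus> (\<ominus> r m)" using r by algebra
    ultimately show "G m \<in> carrier (A Quot I m) \<and> G (Suc m) \<subseteq> G m"
      unfolding G_def using r qc step_sub by auto
  qed
  moreover have "G \<oplus>\<^bsub>invlim A I\<^esub> F = \<zero>\<^bsub>invlim A I\<^esub>"
    unfolding invlim_add invlim_zero
  proof
    fix m show "G m \<oplus>\<^bsub>A Quot I m\<^esub> F m = \<zero>\<^bsub>A Quot I m\<^esub>"
      using r[of m] unfolding G_def qzero by (simp add: qadd A.l_neg)
  qed
  ultimately show ?thesis by blast
qed

lemma one_in: "\<one>\<^bsub>invlim A I\<^esub> \<in> carrier (invlim A I)"
  unfolding invlim_carrier invlim_one qone using qc step_sub selfminus by auto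

lemma zero_in: "\<zero>\<^bsub>invlim A I\<^esub> \<in> carrier (invlim A I)"
  unfolding invlim_carrier invlim_zero qzero using qc step_sub selfminus by auto

lemma add_in: "F \<in> carrier (invlim A I) \<Longrightarrow> G \<in> carrier (invlim A I) \<Longrightarrow> F \<oplus>\<^bsub>invlim A I\<^esub> G \<in> carrier (invlim A I)"
  unfolding invlim_add using compat_add cring.cring_simprules(1)[OF Qcr]
  by (simp add: invlim_carrier)

lemma mult_in: "F \<in> carrier (invlim A I) \<Longrightarrow> G \<in> carrier (invlim A I) \<Longrightarrow> F \<otimes>\<^bsub>invlim A I\<^esub> G \<in> carrier (invlim A I)"
  unfolding invlim_mult using compat_mult cring.cring_simprules(5)[OF Qcr]
  by (simp add: invlim_carrier)

lemma invlim_is_cring: "cring (invlim A I)"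
proof (rule cringI)
  show "abelian_group (invlim A I)"
  proof (rule abelian_groupI)
    show "\<zero>\<^bsub>invlim A I\<^esub> \<in> carrier (invlim A I)" by (rule zero_in)
  next
    fix x y assume "x \<in> carrier (invlim A I)" "y \<in> carrier (invlim A I)"
    then show "x \<oplus>\<^bsub>invlim A I\<^esub> y \<in> carrier (invlim A I)" by (rule add_in)
  next
    fix x y z assume "x \<in> carrier (invlim A I)" "y \<in> carrier (invlim A I)" "z \<in> carrier (invlim A I)"
    then show "x \<oplus>\<^bsub>invlim A I\<^esub> y \<oplus>\<^bsub>invlim A I\<^esub> z = x \<oplus>\<^bsub>invlim A I\<^esub> (y \<oplus>\<^bsub>invlim A I\<^esub> z)"
      unfolding invlim_add invlim_carrier using cring.cring_simprules(7)[OF Qcr] by auto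
  next
    fix x y assume "x \<in> carrier (invlim A I)" "y \<in> carrier (invlim A I)"
    then show "x \<oplus>\<^bsub>invlim A I\<^esub> y = y \<oplus>\<^bsub>invlim A I\<^esub> x"
      unfolding invlim_add invlim_carrier using cring.cring_simprules(10)[OF Qcr] by auto
  next
    fix x assume "x \<in> carrier (invlim A I)"
    then show "\<zero>\<^bsub>invlim A I\<^esub> \<oplus>\<^bsub>invlim A I\<^esub> x = x"
      unfolding invlim_add invlim_zero invlim_carrier using cring.cring_simprules(8)[OF Qcr] by auto
  next
    fix x assume "x \<in> carrier (invlim A I)"
    then show "\<exists>y\<in>carrier (invlim A I). y \<oplus>\<^bsub>invlim A I\<^esub> x = \<zero>\<^bsub>invlim A I\<^esub>" by (rule inv_exists)
  qed
next
  show "comm_monoid (invlim A I)"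
  proof (rule comm_monoidI)
    show "\<one>\<^bsub>invlim A I\<^esub> \<in> carrier (invlim A I)" by (rule one_in)
  next
    fix x y assume "x \<in> carrier (invlim A I)" "y \<in> carrier (invlim A I)"
    then show "x \<otimes>\<^bsub>invlim A I\<^esub> y \<in> carrier (invlim A I)" by (rule mult_in)
  next
    fix x y z assume "x \<in> carrier (invlim A I)" "y \<in> carrier (invlim A I)" "z \<in> carrier (invlim A I)"
    then show "x \<otimes>\<^bsub>invlim A I\<^esub> y \<otimes>\<^bsub>invlim A I\<^esub> z = x \<otimes>\<^bsub>invlim A I\<^esub> (y \<otimes>\<^bsub>invlim A I\<^esub> z)"
      unfolding invlim_mult invlim_carrier using cring.cring_simprules(11)[OF Qcr] by auto
  next
    fix x y assume "x \<in> carrier (invlim A I)" "y \<in> carrier (invlim A I)"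
    then show "x \<otimes>\<^bsub>invlim A I\<^esub> y = y \<otimes>\<^bsub>invlim A I\<^esub> x"
      unfolding invlim_mult invlim_carrier using cring.cring_simprules(14)[OF Qcr] by auto
  next
    fix x assume "x \<in> carrier (invlim A I)"
    then show "\<one>\<^bsub>invlim A I\<^esub> \<otimes>\<^bsub>invlim A I\<^esub> x = x"
      unfolding invlim_mult invlim_one invlim_carrier using cring.cring_simprules(12)[OF Qcr] by auto
  qed
next
  fix x y z assume "x \<in> carrier (invlim A I)" "y \<in> carrier (invlim A I)" "z \<in> carrier (invlim A I)"
  then show "(x \<oplus>\<^bsub>invlim A I\<^esub> y) \<otimes>\<^bsub>invlim A I\<^esub> z = x \<otimes>\<^bsub>invlim A I\<^esub> z \<oplus>\<^bsub>invlim A I\<^esub> y \<otimes>\<^bsub>invlim A I\<^esub> z"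
    unfolding invlim_mult invlim_add invlim_carrier using cring.cring_simprules(13)[OF Qcr] by auto
qed

end


lemma invlim_iso:
  assumes iso: "\<And>m. h m \<in> ring_iso (A Quot I m) (B Quot J m)"
  and mono: "\<And>m C D. C \<in> carrier (A Quot I (Suc m)) \<Longrightarrow> D \<in> carrier (A Quot I m) \<Longrightarrow> (C \<subseteq> D \<longleftrightarrow> h (Suc m) C \<subseteq> h m D)"
  shows "(\<lambda>F m. h m (F m)) \<in> ring_iso (invlim A I) (invlim B J)"
proof -
  have cl: "(\<lambda>m. h m (F m)) \<in> carrier (invlim B J)" if F: "F \<in> carrier (invlim A I)" for F
    unfolding invlim_carrier
  proof
    fix m
    have a: "F m \<in> carrier (A Quot I m)" "F (Suc m) \<in> carrier (A Quot I (Suc m))" "F (Suc m) \<subseteq> F m"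
      using F unfolding invlim_carrier by auto
    show "h m (F m) \<in> carrier (B Quot J m) \<and> h (Suc m) (F (Suc m)) \<subseteq> h m (F m)"
      using ring_iso_memE(1)[OF iso a(1)] mono[OF a(2) a(1)] a(3) by simp
  qed
  show ?thesis
proof (rule ring_iso_memI)
  fix F assume F: "F \<in> carrier (invlim A I)"
  then show "(\<lambda>m. h m (F m)) \<in> carrier (invlim B J)" by (rule cl)
next
  fix F G assume F: "F \<in> carrier (invlim A I)" and G: "G \<in> carrier (invlim A I)"
  show "(\<lambda>m. h m ((F \<otimes>\<^bsub>invlim A I\<^esub> G) m)) = (\<lambda>m. h m (F m)) \<otimes>\<^bsub>invlim B J\<^esub> (\<lambda>m. h m (G m))"
    unfolding invlim_mult
  proof (rule ext)
    fix m
    have a: "F m \<in> carrier (A Quot I m)" "G m \<in> carrier (A Quot I m)" using F G unfolding invlim_carrier by auto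
    show "h m (F m \<otimes>\<^bsub>A Quot I m\<^esub> G m) = h m (F m) \<otimes>\<^bsub>B Quot J m\<^esub> h m (G m)"
      by (rule ring_iso_memE(2)[OF iso a])
  qed
  show "(\<lambda>m. h m ((F \<oplus>\<^bsub>invlim A I\<^esub> G) m)) = (\<lambda>m. h m (F m)) \<oplus>\<^bsub>invlim B J\<^esub> (\<lambda>m. h m (G m))"
    unfolding invlim_add
  proof (rule ext)
    fix m
    have a: "F m \<in> carrier (A Quot I m)" "G m \<in> carrier (A Quot I m)" using F G unfolding invlim_carrier by auto
    show "h m (F m \<oplus>\<^bsub>A Quot I m\<^esub> G m) = h m (F m) \<oplus>\<^bsub>B Quot J m\<^esub> h m (G m)"
      by (rule ring_iso_memE(3)[OF iso a])
  qed
next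
  show "(\<lambda>m. h m (\<one>\<^bsub>invlim A I\<^esub> m)) = \<one>\<^bsub>invlim B J\<^esub>"
    unfolding invlim_one using ring_iso_memE(4)[OF iso] by (rule ext)
next
  have bij: "\<And>m. bij_betw (h m) (carrier (A Quot I m)) (carrier (B Quot J m))"
    using ring_iso_memE(5)[OF iso] .
  show "bij_betw (\<lambda>F m. h m (F m)) (carrier (invlim A I)) (carrier (invlim B J))"
    unfolding bij_betw_def
  proof
    show "inj_on (\<lambda>F m. h m (F m)) (carrier (invlim A I))"
    proof (rule inj_onI)
      fix F G assume F: "F \<in> carrier (invlim A I)" and G: "G \<in> carrier (invlim A I)"
        and eq: "(\<lambda>m. h m (F m)) = (\<lambda>m. h m (G m))"
      show "F = G"
      proof
        fix m
        have "h m (F m) = h m (G m)" using eq by meson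
        moreover have "F m \<in> carrier (A Quot I m)" "G m \<in> carrier (A Quot I m)" using F G unfolding invlim_carrier by auto
        ultimately show "F m = G m" using bij[of m] unfolding bij_betw_def by (metis inj_onD)
      qed
    qed
  next
    show "(\<lambda>F m. h m (F m)) ` carrier (invlim A I) = carrier (invlim B J)"
    proof
      show "(\<lambda>F m. h m (F m)) ` carrier (invlim A I) \<subseteq> carrier (invlim B J)"
        using cl by blast
    next
      show "carrier (invlim B J) \<subseteq> (\<lambda>F m. h m (F m)) ` carrier (invlim A I)"
      proof
        fix G assume G: "G \<in> carrier (invlim B J)"
        define F where "F m = inv_into (carrier (A Quot I m)) (h m) (G m)" for m
        have Fc: "F m \<in> carrier (A Quot I m)" for m
          unfolding F_def using G bij[of m] unfolding invlim_carrier bij_betw_def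
          by (metis inv_into_into)
        have hF: "h m (F m) = G m" for m
          unfolding F_def using G bij[of m] unfolding invlim_carrier bij_betw_def
          by (metis f_inv_into_f)
        have "F \<in> carrier (invlim A I)"
          unfolding invlim_carrier
        proof
          fix m
          have "G (Suc m) \<subseteq> G m" using G unfolding invlim_carrier by blast
          then show "F m \<in> carrier (A Quot I m) \<and> F (Suc m) \<subseteq> F m"
            using Fc[of m] mono[OF Fc[of "Suc m"] Fc[of m]] hF[of m] hF[of "Suc m"] by simp
        qed
        moreover have "G = (\<lambda>m. h m (F m))" using hF by auto
        ultimately show "G \<in> (\<lambda>F m. h m (F m)) ` carrier (invlim A I)" by blast
      qed
    qed
  qed
qed
qed


lemma gauss_carrier: "z \<in> carrier gauss_ring \<longleftrightarrow> (\<exists>u v::int. z = Complex (of_int u) (of_int v))"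
proof
  assume "z \<in> carrier gauss_ring"
  then have "Re z \<in> \<int>" "Im z \<in> \<int>" by (auto simp: gauss_ring_def)
  then obtain u v where "Re z = of_int u" "Im z = of_int v" by (metis Ints_cases)
  then show "\<exists>u v::int. z = Complex (of_int u) (of_int v)" by (metis complex_surj)
qed (auto simp: gauss_ring_def)

lemma gauss_simps [simp]:
  "x \<otimes>\<^bsub>gauss_ring\<^esub> y = x * y" "x \<oplus>\<^bsub>gauss_ring\<^esub> y = x + y"
  "\<one>\<^bsub>gauss_ring\<^esub> = 1" "\<zero>\<^bsub>gauss_ring\<^esub> = 0"
  by (simp_all add: gauss_ring_def)

lemma gi_add: "x \<in> carrier gauss_ring \<Longrightarrow> y \<in> carrier gauss_ring \<Longrightarrow> x + y \<in> carrier gauss_ring"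
  by (auto simp: gauss_ring_def)
lemma gi_mult: "x \<in> carrier gauss_ring \<Longrightarrow> y \<in> carrier gauss_ring \<Longrightarrow> x * y \<in> carrier gauss_ring"
  by (auto simp: gauss_ring_def)
lemma gi_uminus: "x \<in> carrier gauss_ring \<Longrightarrow> - x \<in> carrier gauss_ring"
  by (auto simp: gauss_ring_def)
lemma gi_diff: "x \<in> carrier gauss_ring \<Longrightarrow> y \<in> carrier gauss_ring \<Longrightarrow> x - y \<in> carrier gauss_ring"
  by (auto simp: gauss_ring_def)
lemma gi_of_int [simp]: "of_int k \<in> carrier gauss_ring"
  by (auto simp: gauss_ring_def)
lemma gi_Complex [simp]: "Complex (of_int u) (of_int v) \<in> carrier gauss_ring"
  by (auto simp: gauss_ring_def)
lemma gi_1 [simp]: "1 \<in> carrier gauss_ring" and gi_0 [simp]: "0 \<in> carrier gauss_ring"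
  and gi_i [simp]: "\<i> \<in> carrier gauss_ring"
  by (auto simp: gauss_ring_def)
lemma gi_power: "x \<in> carrier gauss_ring \<Longrightarrow> x ^ n \<in> carrier gauss_ring"
  by (induct n) (auto intro: gi_mult)

lemma gauss_cring: "cring gauss_ring"
proof (rule cringI)
  show "abelian_group gauss_ring"
  proof (rule abelian_groupI)
    fix x assume "x \<in> carrier gauss_ring"
    then show "\<exists>y\<in>carrier gauss_ring. y \<oplus>\<^bsub>gauss_ring\<^esub> x = \<zero>\<^bsub>gauss_ring\<^esub>"
      by (intro bexI[of _ "- x"]) (auto intro: gi_uminus)
  qed (auto intro: gi_add simp: algebra_simps)
  show "comm_monoid gauss_ring"
    by (rule comm_monoidI) (auto intro: gi_mult simp: algebra_simps)
qed (auto simp: algebra_simps)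

lemma gauss_inv: "x \<in> carrier gauss_ring \<Longrightarrow> \<ominus>\<^bsub>gauss_ring\<^esub> x = - x"
  using abelian_group.minus_equality[OF ring.is_abelian_group[OF cring.axioms(1)[OF gauss_cring]], of "- x" x]
  by (simp add: gi_uminus)
lemma gauss_minus: "x \<in> carrier gauss_ring \<Longrightarrow> y \<in> carrier gauss_ring \<Longrightarrow> x \<ominus>\<^bsub>gauss_ring\<^esub> y = x - y"
  by (simp add: a_minus_def gauss_inv)

lemma gauss_PIdl: "PIdl\<^bsub>gauss_ring\<^esub> a = {x * a | x. x \<in> carrier gauss_ring}"
  by (simp add: cgenideal_def)

lemma int_PIdl: "PIdl\<^bsub>\<Z>\<^esub> a = {x * a | x. True}"
  by (simp add: cgenideal_def)

lemma int_PIdl_dvd: "k \<in> PIdl\<^bsub>\<Z>\<^esub> a \<longleftrightarrow> a dvd k"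
  by (auto simp: int_PIdl dvd_def mult.commute)


fun XY :: "nat \<Rightarrow> int \<times> int" where
  "XY 0 = (1, 0)"
| "XY (Suc m) = (fst (XY m) - 2 * snd (XY m), 2 * fst (XY m) + snd (XY m))"

abbreviation "XX m \<equiv> fst (XY m)"
abbreviation "YY m \<equiv> snd (XY m)"

lemma bpow: "(1 + 2 * \<i>) ^ m = Complex (of_int (XX m)) (of_int (YY m))"
proof (induct m)
  case 0 then show ?case by (simp add: one_complex.code)
next
  case (Suc m)
  show ?case by (simp add: Suc complex_eq_iff)
qed

lemma XY_norm: "XX m ^ 2 + YY m ^ 2 = 5 ^ m"
proof (induct m)
  case (Suc m)
  have "(XX m - 2 * YY m)^2 + (2 * XX m + YY m)^2 = 5 * (XX m ^ 2 + YY m ^ 2)"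
    by (simp add: power2_eq_square algebra_simps)
  then show ?case using Suc by simp
qed simp

lemma XY_inv: "m \<ge> 1 \<Longrightarrow> 5 dvd (YY m - 2 * XX m) \<and> \<not> 5 dvd XX m"
proof (induct m)
  case 0 then show ?case by simp
next
  case (Suc m)
  show ?case
  proof (cases "m = 0")
    case True then show ?thesis by simp
  next
    case False
    then have IH: "5 dvd (YY m - 2 * XX m)" "\<not> 5 dvd XX m" using Suc by auto
    obtain t where t: "YY m - 2 * XX m = 5 * t" using IH(1) by (auto simp: dvd_def)
    have "\<not> (5::int) dvd (XX m - 2 * YY m)"
    proof
      assume "(5::int) dvd (XX m - 2 * YY m)"
      moreover have "XX m - 2 * YY m = - 3 * XX m - 10 * t" using t by simp
      ultimately have "(5::int) dvd (- 3 * XX m - 10 * t)" by simp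
      then have "(5::int) dvd XX m" by presburger
      then show False using IH(2) by simp
    qed
    moreover have "(2 * XX m + YY m) - 2 * (XX m - 2 * YY m) = 5 * YY m" by simp
    moreover have "YY (Suc m) - 2 * XX (Suc m) = 5 * YY m" "XX (Suc m) = XX m - 2 * YY m" by simp_all
    ultimately show ?thesis by simp
  qed
qed

lemma p5: "Factorial_Ring.prime (5::int)" 
proof -
  have "{2..<5::int} = {2,3,4}" by auto
  then show ?thesis by (simp add: prime_int_iff')
qed

lemma XY_cop: "coprime (YY m) (5 ^ m)"
proof (cases "m = 0")
  case True then show ?thesis by simp
next
  case False
  then have h: "5 dvd (YY m - 2 * XX m)" "\<not> 5 dvd XX m" using XY_inv by auto
  have "\<not> (5::int) dvd YY m"
  proof
    assume "(5::int) dvd YY m"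
    with h(1) have "(5::int) dvd XX m" by presburger
    with h(2) show False by simp
  qed
  then have "coprime (YY m) 5" by (metis p5 coprime_commute prime_imp_coprime)
  then show ?thesis by simp
qed


lemma Jiff:
  "Complex (of_int u) (of_int v) \<in> PIdl\<^bsub>gauss_ring\<^esub> ((1 + 2 * \<i>) ^ m) \<longleftrightarrow>
     (5::int) ^ m dvd (u * XX m + v * YY m) \<and> (5::int) ^ m dvd (v * XX m - u * YY m)"
  (is "?L \<longleftrightarrow> ?R")
proof
  assume ?L
  then obtain x where x: "x \<in> carrier gauss_ring" "Complex (of_int u) (of_int v) = x * (1 + 2 * \<i>) ^ m"
    by (auto simp: gauss_PIdl)
  obtain p q where pq: "x = Complex (of_int p) (of_int q)" using x(1) gauss_carrier by blast
  have "Complex (of_int u) (of_int v) = Complex (of_int (p * XX m - q * YY m)) (of_int (p * YY m + q * XX m))"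
    using x(2) unfolding pq bpow by (simp add: complex_eq_iff)
  then have u: "u = p * XX m - q * YY m" and v: "v = p * YY m + q * XX m"
    by (simp_all only: complex.inject of_int_eq_iff)
  have "u * XX m + v * YY m = p * (XX m ^ 2 + YY m ^ 2)"
    unfolding u v by (simp add: algebra_simps power2_eq_square)
  moreover have "v * XX m - u * YY m = q * (XX m ^ 2 + YY m ^ 2)"
    unfolding u v by (simp add: algebra_simps power2_eq_square)
  ultimately show ?R by (simp add: XY_norm)
next
  assume ?R
  then obtain p q where p: "u * XX m + v * YY m = 5 ^ m * p" and q: "v * XX m - u * YY m = 5 ^ m * q"
    by (auto simp: dvd_def)
  have "(5::int) ^ m * u = 5 ^ m * (p * XX m - q * YY m)"
  proof -
    have "(5::int) ^ m * u = u * (XX m ^ 2 + YY m ^ 2)" by (simp add: XY_norm)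
    also have "\<dots> = (u * XX m + v * YY m) * XX m - (v * XX m - u * YY m) * YY m"
      by (simp add: algebra_simps power2_eq_square)
    also have "\<dots> = 5 ^ m * (p * XX m - q * YY m)" unfolding p q by (simp add: algebra_simps)
    finally show ?thesis .
  qed
  then have u: "u = p * XX m - q * YY m" by simp
  have "(5::int) ^ m * v = 5 ^ m * (p * YY m + q * XX m)"
  proof -
    have "(5::int) ^ m * v = v * (XX m ^ 2 + YY m ^ 2)" by (simp add: XY_norm)
    also have "\<dots> = (u * XX m + v * YY m) * YY m + (v * XX m - u * YY m) * XX m"
      by (simp add: algebra_simps power2_eq_square)
    also have "\<dots> = 5 ^ m * (p * YY m + q * XX m)" unfolding p q by (simp add: algebra_simps)
    finally show ?thesis .
  qed
  then have v: "v = p * YY m + q * XX m" by simp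
  have "Complex (of_int u) (of_int v) = Complex (of_int p) (of_int q) * (1 + 2 * \<i>) ^ m"
    unfolding bpow u v by (simp add: complex_eq_iff)
  then show ?L unfolding gauss_PIdl by auto
qed

lemma N2: "(of_int k :: complex) \<in> PIdl\<^bsub>gauss_ring\<^esub> ((1 + 2 * \<i>) ^ m) \<longleftrightarrow> (5::int) ^ m dvd k"
proof -
  have "(of_int k :: complex) = Complex (of_int k) (of_int 0)" by (simp add: complex_eq_iff)
  then have "(of_int k :: complex) \<in> PIdl\<^bsub>gauss_ring\<^esub> ((1 + 2 * \<i>) ^ m) \<longleftrightarrow>
     (5::int) ^ m dvd (k * XX m) \<and> (5::int) ^ m dvd (- (k * YY m))"
    using Jiff[of k 0 m] by simp
  also have "\<dots> \<longleftrightarrow> (5::int) ^ m dvd k"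
  proof
    assume "(5::int) ^ m dvd (k * XX m) \<and> (5::int) ^ m dvd (- (k * YY m))"
    then have "(5::int) ^ m dvd (k * YY m)" by simp
    then show "(5::int) ^ m dvd k"
      using XY_cop[of m] by (metis coprime_commute coprime_dvd_mult_left_iff)
  qed auto
  finally show ?thesis .
qed

lemma N1:
  assumes "z \<in> carrier gauss_ring"
  shows "\<exists>k::int. z - of_int k \<in> PIdl\<^bsub>gauss_ring\<^esub> ((1 + 2 * \<i>) ^ m)"
proof -
  obtain u v where z: "z = Complex (of_int u) (of_int v)" using assms gauss_carrier by blast
  obtain \<alpha> \<beta> where ab: "\<alpha> * YY m + \<beta> * 5 ^ m = 1"
    using bezout_int[of "YY m" "5 ^ m"] XY_cop[of m] by (metis coprime_iff_gcd_eq_1)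
  define k where "k = u - v * XX m * \<alpha>"
  have "z - of_int k = Complex (of_int (v * XX m * \<alpha>)) (of_int v)"
    unfolding z k_def by (simp add: complex_eq_iff)
  moreover have "(5::int) ^ m dvd (v * XX m * \<alpha> * XX m + v * YY m)"
  proof -
    have "YY m * (v * XX m * \<alpha> * XX m + v * YY m) = v * XX m ^ 2 * (\<alpha> * YY m) + v * YY m ^ 2"
      by (simp add: algebra_simps power2_eq_square)
    also have "\<dots> = v * XX m ^ 2 * (1 - \<beta> * 5 ^ m) + v * YY m ^ 2"
      using ab by (simp add: eq_diff_eq)
    also have "\<dots> = v * (XX m ^ 2 + YY m ^ 2) - v * XX m ^ 2 * \<beta> * 5 ^ m"
      by (simp add: algebra_simps)
    also have "\<dots> = 5 ^ m * (v - v * XX m ^ 2 * \<beta>)" by (simp add: XY_norm algebra_simps)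
    finally have "(5::int) ^ m dvd YY m * (v * XX m * \<alpha> * XX m + v * YY m)" by simp
    then show ?thesis using XY_cop[of m] by (metis coprime_commute coprime_dvd_mult_right_iff)
  qed
  moreover have "(5::int) ^ m dvd (v * XX m - v * XX m * \<alpha> * YY m)"
  proof -
    have "v * XX m - v * XX m * \<alpha> * YY m = v * XX m * (1 - \<alpha> * YY m)" by (simp add: algebra_simps)
    also have "\<dots> = v * XX m * (\<beta> * 5 ^ m)" using ab by (simp add: eq_diff_eq)
    finally show ?thesis by simp
  qed
  ultimately show ?thesis using Jiff by metis
qed


abbreviation "bb \<equiv> (1 + 2 * \<i> :: complex)"
abbreviation "II m \<equiv> PIdl\<^bsub>\<Z>\<^esub> ((5::int) ^ m)"
abbreviation "JJ m \<equiv> PIdl\<^bsub>gauss_ring\<^esub> (bb ^ m)"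

lemma gi_b: "bb \<in> carrier gauss_ring"
  unfolding gauss_carrier by (rule exI[of _ 1], rule exI[of _ 2]) (simp add: complex_eq_iff)

lemma II_ideal: "ideal (II m) \<Z>"
  by (rule int.cgenideal_ideal) simp

lemma JJ_ideal: "ideal (JJ m) gauss_ring"
  by (rule cring.cgenideal_ideal[OF gauss_cring]) (simp add: gi_power gi_b)

lemma II_dec: "II (Suc m) \<subseteq> II m"
  by (auto simp: int_PIdl_dvd dest: dvd_mult_right)

lemma JJ_dec: "JJ (Suc m) \<subseteq> JJ m"
proof
  fix z assume "z \<in> JJ (Suc m)"
  then obtain x where x: "x \<in> carrier gauss_ring" "z = x * bb ^ Suc m" by (auto simp: gauss_PIdl)
  then have "z = (x * bb) * bb ^ m" by (simp add: algebra_simps)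
  moreover have "x * bb \<in> carrier gauss_ring" using x gi_b gi_mult by blast
  ultimately show "z \<in> JJ m" by (auto simp: gauss_PIdl)
qed

lemma JJ_carr: "JJ m \<subseteq> carrier gauss_ring"
  using additive_subgroup.a_subset[OF ideal.axioms(1)[OF JJ_ideal]] .

lemma JJ_of_int: "(of_int k :: complex) \<in> JJ m \<longleftrightarrow> (5::int) ^ m dvd k"
  using N2 .

definition H :: "nat \<Rightarrow> int set \<Rightarrow> complex set" where
  "H m C = JJ m +>\<^bsub>gauss_ring\<^esub> of_int (SOME x. x \<in> C)"

lemma Hval: "H m (II m +>\<^bsub>\<Z>\<^esub> k) = JJ m +>\<^bsub>gauss_ring\<^esub> of_int k"
proof -
  have "k \<in> II m +>\<^bsub>\<Z>\<^esub> k" using ideal.axioms(1)[OF II_ideal]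
    by (meson II_ideal abelian_subgroup.a_rcos_self ideal.axioms(1) additive_subgroup.a_subgroup int_Zcarr
        ideal_def ring.is_abelian_group abelian_subgroupI3) 
  then have y: "(SOME y. y \<in> II m +>\<^bsub>\<Z>\<^esub> k) \<in> II m +>\<^bsub>\<Z>\<^esub> k" by (rule someI)
  define y where "y = (SOME y. y \<in> II m +>\<^bsub>\<Z>\<^esub> k)"
  have "y - k \<in> II m" using y ideal.cos_mem[OF II_ideal, of y k] unfolding y_def by (simp add: int_a_minus_eq)
  then have "(5::int) ^ m dvd (y - k)" by (simp add: int_PIdl_dvd)
  then have "(of_int y - of_int k :: complex) \<in> JJ m" using JJ_of_int[of "y - k" m] by simp
  then have "of_int y \<ominus>\<^bsub>gauss_ring\<^esub> of_int k \<in> JJ m" by (simp add: gauss_minus)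
  then show ?thesis unfolding H_def y_def[symmetric] using ideal.cos_eq[OF JJ_ideal] by simp
qed


lemma Zq_carrier: "C \<in> carrier (\<Z> Quot II m) \<longleftrightarrow> (\<exists>k. C = II m +>\<^bsub>\<Z>\<^esub> k)"
  using ideal.quot_carrier[OF II_ideal] by simp

lemma Gq_carrier: "C \<in> carrier (gauss_ring Quot JJ m) \<longleftrightarrow> (\<exists>z\<in>carrier gauss_ring. C = JJ m +>\<^bsub>gauss_ring\<^esub> z)"
  using ideal.quot_carrier[OF JJ_ideal] by simp

lemma Gcos_eq: "z \<in> carrier gauss_ring \<Longrightarrow> w \<in> carrier gauss_ring \<Longrightarrow>
  JJ m +>\<^bsub>gauss_ring\<^esub> z = JJ m +>\<^bsub>gauss_ring\<^esub> w \<longleftrightarrow> z - w \<in> JJ m"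
  using ideal.cos_eq[OF JJ_ideal] by (simp add: gauss_minus)

lemma Zcos_eq: "II m +>\<^bsub>\<Z>\<^esub> x = II m +>\<^bsub>\<Z>\<^esub> y \<longleftrightarrow> (5::int) ^ m dvd (x - y)"
  using ideal.cos_eq[OF II_ideal] by (simp add: int_a_minus_eq int_PIdl_dvd)

lemma H_iso: "H m \<in> ring_iso (\<Z> Quot II m) (gauss_ring Quot JJ m)"
proof (rule ring_iso_memI)
  fix C assume a: "C \<in> carrier (\<Z> Quot II m)"
  obtain k where "C = II m +>\<^bsub>\<Z>\<^esub> k" using a Zq_carrier[of C m] by blast
  then show "H m C \<in> carrier (gauss_ring Quot JJ m)" by (auto simp: Hval Gq_carrier)
next
  fix C D assume a: "C \<in> carrier (\<Z> Quot II m)" "D \<in> carrier (\<Z> Quot II m)"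
  obtain k where k: "C = II m +>\<^bsub>\<Z>\<^esub> k" using a(1) Zq_carrier[of C m] by blast
  obtain l where l: "D = II m +>\<^bsub>\<Z>\<^esub> l" using a(2) Zq_carrier[of D m] by blast
  note kl = k l
  have "H m (C \<otimes>\<^bsub>\<Z> Quot II m\<^esub> D) = H m (II m +>\<^bsub>\<Z>\<^esub> (k * l))"
    unfolding kl using ideal.quot_mult[OF II_ideal] by simp
  also have "\<dots> = JJ m +>\<^bsub>gauss_ring\<^esub> (of_int k * of_int l)" by (simp add: Hval)
  also have "\<dots> = H m C \<otimes>\<^bsub>gauss_ring Quot JJ m\<^esub> H m D"
    unfolding kl Hval using ideal.quot_mult[OF JJ_ideal] by simp
  finally show "H m (C \<otimes>\<^bsub>\<Z> Quot II m\<^esub> D) = H m C \<otimes>\<^bsub>gauss_ring Quot JJ m\<^esub> H m D" .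
  have "H m (C \<oplus>\<^bsub>\<Z> Quot II m\<^esub> D) = H m (II m +>\<^bsub>\<Z>\<^esub> (k + l))"
    unfolding kl using ideal.quot_add[OF II_ideal] by simp
  also have "\<dots> = JJ m +>\<^bsub>gauss_ring\<^esub> (of_int k + of_int l)" by (simp add: Hval)
  also have "\<dots> = H m C \<oplus>\<^bsub>gauss_ring Quot JJ m\<^esub> H m D"
    unfolding kl Hval using ideal.quot_add[OF JJ_ideal] by simp
  finally show "H m (C \<oplus>\<^bsub>\<Z> Quot II m\<^esub> D) = H m C \<oplus>\<^bsub>gauss_ring Quot JJ m\<^esub> H m D" .
next
  show "H m \<one>\<^bsub>\<Z> Quot II m\<^esub> = \<one>\<^bsub>gauss_ring Quot JJ m\<^esub>"
    using ideal.quot_one[OF II_ideal] ideal.quot_one[OF JJ_ideal] Hval[of m 1] by simp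
next
  show "bij_betw (H m) (carrier (\<Z> Quot II m)) (carrier (gauss_ring Quot JJ m))"
    unfolding bij_betw_def
  proof
    show "inj_on (H m) (carrier (\<Z> Quot II m))"
    proof (rule inj_onI)
      fix C D assume a: "C \<in> carrier (\<Z> Quot II m)" "D \<in> carrier (\<Z> Quot II m)" and eq: "H m C = H m D"
      obtain k where k: "C = II m +>\<^bsub>\<Z>\<^esub> k" using a(1) Zq_carrier[of C m] by blast
      obtain l where l: "D = II m +>\<^bsub>\<Z>\<^esub> l" using a(2) Zq_carrier[of D m] by blast
      note kl = k l
      have "(of_int k - of_int l :: complex) \<in> JJ m" using eq unfolding kl Hval by (simp add: Gcos_eq)
      then have "(of_int (k - l) :: complex) \<in> JJ m" by simp
      then show "C = D" unfolding kl Zcos_eq JJ_of_int .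
    qed
  next
    show "H m ` carrier (\<Z> Quot II m) = carrier (gauss_ring Quot JJ m)"
    proof
      show "H m ` carrier (\<Z> Quot II m) \<subseteq> carrier (gauss_ring Quot JJ m)"
        by (auto simp: Zq_carrier Hval Gq_carrier) (metis gi_of_int)
    next
      show "carrier (gauss_ring Quot JJ m) \<subseteq> H m ` carrier (\<Z> Quot II m)"
      proof
        fix C assume a: "C \<in> carrier (gauss_ring Quot JJ m)"
        obtain z where z: "z \<in> carrier gauss_ring" "C = JJ m +>\<^bsub>gauss_ring\<^esub> z" using a Gq_carrier[of C m] by blast
        obtain k where "z - of_int k \<in> JJ m" using N1[OF z(1)] by blast
        then have "C = H m (II m +>\<^bsub>\<Z>\<^esub> k)" unfolding z Hval using Gcos_eq z(1) by simp
        moreover have "II m +>\<^bsub>\<Z>\<^esub> k \<in> carrier (\<Z> Quot II m)" using Zq_carrier by blast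
        ultimately show "C \<in> H m ` carrier (\<Z> Quot II m)" by blast
      qed
    qed
  qed
qed

lemma Zcos_sub: "II (Suc m) +>\<^bsub>\<Z>\<^esub> x \<subseteq> II m +>\<^bsub>\<Z>\<^esub> y \<longleftrightarrow> (5::int) ^ m dvd (x - y)"
  using cos_sub[OF II_ideal II_ideal II_dec] by (simp add: int_a_minus_eq int_PIdl_dvd)

lemma Gcos_sub: "z \<in> carrier gauss_ring \<Longrightarrow> w \<in> carrier gauss_ring \<Longrightarrow>
  JJ (Suc m) +>\<^bsub>gauss_ring\<^esub> z \<subseteq> JJ m +>\<^bsub>gauss_ring\<^esub> w \<longleftrightarrow> z - w \<in> JJ m"
  using cos_sub[OF JJ_ideal JJ_ideal JJ_dec] by (simp add: gauss_minus)

lemma H_mono: "C \<in> carrier (\<Z> Quot II (Suc m)) \<Longrightarrow> D \<in> carrier (\<Z> Quot II m) \<Longrightarrow>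
   C \<subseteq> D \<longleftrightarrow> H (Suc m) C \<subseteq> H m D"
proof -
  assume a: "C \<in> carrier (\<Z> Quot II (Suc m))" "D \<in> carrier (\<Z> Quot II m)"
  obtain k where k: "C = II (Suc m) +>\<^bsub>\<Z>\<^esub> k" using a(1) Zq_carrier[of C "Suc m"] by blast
  obtain l where l: "D = II m +>\<^bsub>\<Z>\<^esub> l" using a(2) Zq_carrier[of D m] by blast
  note kl = k l
  have c: "C \<subseteq> D \<longleftrightarrow> 5 ^ m dvd (k - l)" unfolding kl by (rule Zcos_sub)
  have d: "H (Suc m) C \<subseteq> H m D \<longleftrightarrow> (of_int k - of_int l :: complex) \<in> JJ m"
    unfolding kl Hval by (rule Gcos_sub) simp_all
  have e: "(of_int k - of_int l :: complex) \<in> JJ m \<longleftrightarrow> 5 ^ m dvd (k - l)"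
    using JJ_of_int[of "k - l" m] by simp
  show ?thesis using c d e by simp
qed


lemma Z5_def': "Z5 = invlim \<Z> II"
  by (simp add: Z5_def)

lemma tower_Z: "tower \<Z> II"
  using tower.intro[where A="\<Z>" and I=II, OF int_is_cring II_ideal II_dec] .

lemma tower_G: "tower gauss_ring JJ"
  using tower.intro[where A=gauss_ring and I=JJ, OF gauss_cring JJ_ideal JJ_dec] .

lemma Z5_cring: "cring Z5"
  unfolding Z5_def' by (rule tower.invlim_is_cring[OF tower_Z])

lemma Z5_ring: "ring Z5"
  using Z5_cring cring.axioms(1) by blast

lemma part_iv: "invlim gauss_ring JJ \<simeq> Z5"
proof -
  have "(\<lambda>F m. H m (F m)) \<in> ring_iso Z5 (invlim gauss_ring JJ)"
    unfolding Z5_def' by (rule invlim_iso[where h=H and A="\<Z>" and I=II and B=gauss_ring and J=JJ, OF H_iso H_mono])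
  then have "Z5 \<simeq> invlim gauss_ring JJ" unfolding is_ring_iso_def by blast
  then show ?thesis using ring_iso_sym[OF Z5_ring] by blast
qed

lemma Zq_ring: "ring (\<Z> Quot II m)"
  using ideal.quotient_is_ring[OF II_ideal] .

lemma Gq_ring: "ring (gauss_ring Quot JJ m)"
  using ideal.quotient_is_ring[OF JJ_ideal] .

lemma ZFact5: "ZFact 5 = \<Z> Quot II 1"
  unfolding ZFact_def using int.cgenideal_eq_genideal[of 5] by simp

lemma Zcos_mem: "j \<in> II m +>\<^bsub>\<Z>\<^esub> k \<longleftrightarrow> (5::int) ^ m dvd (j - k)"
  using ideal.cos_mem[OF II_ideal] by (simp add: int_a_minus_eq int_PIdl_dvd)

lemma Zq_zero: "\<zero>\<^bsub>\<Z> Quot II m\<^esub> = II m +>\<^bsub>\<Z>\<^esub> 0"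
  using ideal.quot_zero[OF II_ideal] by simp

lemma Zq_one: "\<one>\<^bsub>\<Z> Quot II m\<^esub> = II m +>\<^bsub>\<Z>\<^esub> 1"
  using ideal.quot_one[OF II_ideal] by simp

lemma Zq_mult: "(II m +>\<^bsub>\<Z>\<^esub> x) \<otimes>\<^bsub>\<Z> Quot II m\<^esub> (II m +>\<^bsub>\<Z>\<^esub> y) = II m +>\<^bsub>\<Z>\<^esub> (x * y)"
  using ideal.quot_mult[OF II_ideal] by simp

lemma field_Zq1: "field (\<Z> Quot II 1)"
proof (rule cring.cring_fieldI2[OF ideal.quotient_is_cring[OF II_ideal int_is_cring]])
  show "\<zero>\<^bsub>\<Z> Quot II 1\<^esub> \<noteq> \<one>\<^bsub>\<Z> Quot II 1\<^esub>"
    unfolding Zq_zero Zq_one Zcos_eq by simp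
next
  fix C assume a: "C \<in> carrier (\<Z> Quot II 1)" "C \<noteq> \<zero>\<^bsub>\<Z> Quot II 1\<^esub>"
  obtain k where k: "C = II 1 +>\<^bsub>\<Z>\<^esub> k" using a(1) Zq_carrier[of C 1] by blast
  have "\<not> (5::int) dvd k" using a(2) unfolding k Zq_zero Zcos_eq by simp
  then have "coprime k 5" using p5 by (metis coprime_commute prime_imp_coprime)
  then obtain \<alpha> \<beta> where ab: "\<alpha> * k + \<beta> * 5 = (1::int)"
    using bezout_int[of k 5] by (metis coprime_iff_gcd_eq_1)
  have "(5::int) ^ 1 dvd (k * \<alpha> - 1)"
  proof -
    have "k * \<alpha> - 1 = 5 * (- \<beta>)" using ab by (simp add: algebra_simps)
    then show ?thesis by simp
  qed
  then have "C \<otimes>\<^bsub>\<Z> Quot II 1\<^esub> (II 1 +>\<^bsub>\<Z>\<^esub> \<alpha>) = \<one>\<^bsub>\<Z> Quot II 1\<^esub>"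
    unfolding k Zq_mult Zq_one Zcos_eq .
  moreover have "II 1 +>\<^bsub>\<Z>\<^esub> \<alpha> \<in> carrier (\<Z> Quot II 1)" using Zq_carrier by blast
  ultimately show "\<exists>D\<in>carrier (\<Z> Quot II 1). C \<otimes>\<^bsub>\<Z> Quot II 1\<^esub> D = \<one>\<^bsub>\<Z> Quot II 1\<^esub>" by blast
qed

lemma part_iii: "gauss_ring Quot JJ 1 \<simeq> ZFact 5" and part_iii_field: "field (gauss_ring Quot JJ 1)"
proof -
  have "\<Z> Quot II 1 \<simeq> gauss_ring Quot JJ 1" using H_iso unfolding is_ring_iso_def by blast
  then show "gauss_ring Quot JJ 1 \<simeq> ZFact 5" unfolding ZFact5 using ring_iso_sym[OF Zq_ring] by blast
  have "field ((gauss_ring Quot JJ 1) \<lparr> zero := H 1 \<zero>\<^bsub>\<Z> Quot II 1\<^esub> \<rparr>)"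
    by (rule field.ring_iso_imp_img_field[OF field_Zq1 H_iso])
  moreover have "H 1 \<zero>\<^bsub>\<Z> Quot II 1\<^esub> = JJ 1 +>\<^bsub>gauss_ring\<^esub> 0"
    unfolding Zq_zero Hval by simp
  moreover have "JJ 1 +>\<^bsub>gauss_ring\<^esub> 0 = JJ 1"
    using ideal.quot_zero[OF JJ_ideal, of 1] by (simp add: FactRing_def)
  ultimately show "field (gauss_ring Quot JJ 1)" by (simp add: FactRing_def)
qed


definition proj :: "nat \<Rightarrow> (nat \<Rightarrow> int set) \<Rightarrow> int set" where "proj m F = F m"

lemma Z5_carrier: "F \<in> carrier Z5 \<longleftrightarrow> (\<forall>n. F n \<in> carrier (\<Z> Quot II n) \<and> F (Suc n) \<subseteq> F n)"
  unfolding Z5_def' invlim_carrier ..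

lemma Z5_chain: assumes "F \<in> carrier Z5" "j \<le> n" shows "F n \<subseteq> F j"
  using assms(2)
proof (induct n rule: dec_induct)
  case (step n) then show ?case using assms(1) Z5_carrier by blast
qed simp

lemma Z5_of_int_carrier: "Z5_of_int k \<in> carrier Z5"
  unfolding Z5_carrier Z5_of_int_def using Zq_carrier Zcos_sub by auto

lemma proj_hom: "ring_hom_ring Z5 (\<Z> Quot II m) (proj m)"
proof (rule ring_hom_ringI[OF Z5_ring Zq_ring])
  fix F assume "F \<in> carrier Z5" then show "proj m F \<in> carrier (\<Z> Quot II m)"
    unfolding proj_def Z5_carrier by blast
next
  fix F G show "proj m (F \<otimes>\<^bsub>Z5\<^esub> G) = proj m F \<otimes>\<^bsub>\<Z> Quot II m\<^esub> proj m G"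
    unfolding proj_def Z5_def' invlim_mult by simp
  show "proj m (F \<oplus>\<^bsub>Z5\<^esub> G) = proj m F \<oplus>\<^bsub>\<Z> Quot II m\<^esub> proj m G"
    unfolding proj_def Z5_def' invlim_add by simp
next
  show "proj m \<one>\<^bsub>Z5\<^esub> = \<one>\<^bsub>\<Z> Quot II m\<^esub>"
    unfolding proj_def Z5_def' invlim_one by simp
qed

lemma proj_surj: "proj m ` carrier Z5 = carrier (\<Z> Quot II m)"
proof
  show "proj m ` carrier Z5 \<subseteq> carrier (\<Z> Quot II m)"
    by (auto simp: proj_def Z5_carrier)
next
  show "carrier (\<Z> Quot II m) \<subseteq> proj m ` carrier Z5"
  proof
    fix C assume a: "C \<in> carrier (\<Z> Quot II m)"
    obtain k where k: "C = II m +>\<^bsub>\<Z>\<^esub> k" using a Zq_carrier[of C m] by blast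
    have "C = proj m (Z5_of_int k)" unfolding k proj_def Z5_of_int_def by simp
    then show "C \<in> proj m ` carrier Z5" using Z5_of_int_carrier by blast
  qed
qed

lemma Zq_zero': "\<zero>\<^bsub>\<Z> Quot II m\<^esub> = II m"
  by (simp add: FactRing_def)

lemma Z5_mult: "(F \<otimes>\<^bsub>Z5\<^esub> G) n = F n \<otimes>\<^bsub>\<Z> Quot II n\<^esub> G n"
  unfolding Z5_def' invlim_mult by simp

lemma II_cos0: "II m +>\<^bsub>\<Z>\<^esub> x = II m \<longleftrightarrow> (5::int) ^ m dvd x"
  using Zcos_eq[of m x 0] Zq_zero[of m] Zq_zero'[of m] by simp

lemma kernel_eq: "a_kernel Z5 (\<Z> Quot II m) (proj m) = PIdl\<^bsub>Z5\<^esub> (Z5_of_int (5 ^ m))"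
proof
  show "a_kernel Z5 (\<Z> Quot II m) (proj m) \<subseteq> PIdl\<^bsub>Z5\<^esub> (Z5_of_int (5 ^ m))"
  proof
    fix F assume "F \<in> a_kernel Z5 (\<Z> Quot II m) (proj m)"
    then have F: "F \<in> carrier Z5" and Fm: "F m = II m"
      unfolding a_kernel_def' proj_def Zq_zero' by auto
    define r where "r n = (SOME k. F n = II n +>\<^bsub>\<Z>\<^esub> k)" for n
    have r: "F n = II n +>\<^bsub>\<Z>\<^esub> r n" for n
      unfolding r_def by (rule someI_ex) (use F Z5_carrier Zq_carrier in blast)
    have rin: "r n \<in> F n" for n unfolding r[of n] Zcos_mem by simp
    have dv: "(5::int) ^ m dvd r (n + m)" for n
    proof -
      have "r (n + m) \<in> F m" using rin Z5_chain[OF F, of m "n + m"] by auto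
      then show ?thesis unfolding Fm int_PIdl_dvd .
    qed
    define g where "g n = r (n + m) div 5 ^ m" for n
    have rg: "r (n + m) = 5 ^ m * g n" for n unfolding g_def using dv by simp
    define G where "G n = II n +>\<^bsub>\<Z>\<^esub> g n" for n
    have G: "G \<in> carrier Z5"
      unfolding Z5_carrier
    proof
      fix n
      have "F (Suc (n + m)) \<subseteq> F (n + m)" using F Z5_carrier by blast
      then have "(5::int) ^ (n + m) dvd (r (Suc n + m) - r (n + m))"
        using r Zcos_sub by simp
      then have "(5::int) ^ m * 5 ^ n dvd 5 ^ m * (g (Suc n) - g n)"
        unfolding rg by (simp add: power_add algebra_simps)
      then have "(5::int) ^ n dvd (g (Suc n) - g n)" by simp
      then show "G n \<in> carrier (\<Z> Quot II n) \<and> G (Suc n) \<subseteq> G n"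
        unfolding G_def Zcos_sub using Zq_carrier by blast
    qed
    have "F = G \<otimes>\<^bsub>Z5\<^esub> Z5_of_int (5 ^ m)"
    proof
      fix n
      have "r (n + m) \<in> F n" using rin Z5_chain[OF F, of n "n + m"] by auto
      then have "F n = II n +>\<^bsub>\<Z>\<^esub> r (n + m)"
        unfolding r[of n] Zcos_mem Zcos_eq by (simp add: dvd_diff_commute)
      also have "\<dots> = G n \<otimes>\<^bsub>\<Z> Quot II n\<^esub> Z5_of_int (5 ^ m) n"
        unfolding G_def Z5_of_int_def Zq_mult rg by (simp add: mult.commute)
      finally show "F n = (G \<otimes>\<^bsub>Z5\<^esub> Z5_of_int (5 ^ m)) n" unfolding Z5_mult .
    qed
    then show "F \<in> PIdl\<^bsub>Z5\<^esub> (Z5_of_int (5 ^ m))" unfolding cgenideal_def using G by blast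
  qed
next
  show "PIdl\<^bsub>Z5\<^esub> (Z5_of_int (5 ^ m)) \<subseteq> a_kernel Z5 (\<Z> Quot II m) (proj m)"
  proof
    fix F assume "F \<in> PIdl\<^bsub>Z5\<^esub> (Z5_of_int (5 ^ m))"
    then obtain G where G: "G \<in> carrier Z5" "F = G \<otimes>\<^bsub>Z5\<^esub> Z5_of_int (5 ^ m)"
      unfolding cgenideal_def by blast
    have Fc: "F \<in> carrier Z5" unfolding G(2) Z5_def'
      by (rule tower.mult_in[OF tower_Z]) (use G(1) Z5_of_int_carrier Z5_def' in auto)
    obtain k where k: "G m = II m +>\<^bsub>\<Z>\<^esub> k" using G(1) Z5_carrier Zq_carrier by blast
    have "F m = II m +>\<^bsub>\<Z>\<^esub> (k * 5 ^ m)"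
      unfolding G(2) Z5_mult k Z5_of_int_def Zq_mult ..
    also have "\<dots> = II m" unfolding II_cos0 by simp
    finally show "F \<in> a_kernel Z5 (\<Z> Quot II m) (proj m)"
      unfolding a_kernel_def' proj_def Zq_zero' using Fc by simp
  qed
qed

lemma part_v: "gauss_ring Quot JJ m \<simeq> Z5 Quot (PIdl\<^bsub>Z5\<^esub> (Z5_of_int (5 ^ m)))"
proof -
  have "Z5 Quot (a_kernel Z5 (\<Z> Quot II m) (proj m)) \<simeq> \<Z> Quot II m"
    by (rule ring_hom_ring.FactRing_iso[OF proj_hom proj_surj])
  then have 1: "\<Z> Quot II m \<simeq> Z5 Quot (PIdl\<^bsub>Z5\<^esub> (Z5_of_int (5 ^ m)))"
    unfolding kernel_eq
    using ring_iso_sym ideal.quotient_is_ring cring.cgenideal_ideal[OF Z5_cring Z5_of_int_carrier] by blast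
  have "\<Z> Quot II m \<simeq> gauss_ring Quot JJ m" using H_iso unfolding is_ring_iso_def by blast
  then have "gauss_ring Quot JJ m \<simeq> \<Z> Quot II m" using ring_iso_sym[OF Zq_ring] by blast
  then show ?thesis using 1 ring_iso_trans by blast
qed


definition rep :: "(nat \<Rightarrow> complex) \<Rightarrow> nat \<Rightarrow> complex \<Rightarrow> bool" where
  "rep a N z \<longleftrightarrow> (\<forall>k. a k \<in> mu4_0) \<and> (\<forall>k\<ge>N. a k = 0) \<and> z = (\<Sum>k<N. a k * bb ^ k)"

lemma rep_digit_rep: "rep a N z \<Longrightarrow> digit_rep bb a z"
proof -
  assume r: "rep a N z"
  have sub: "{k. a k \<noteq> 0} \<subseteq> {..<N}" using r unfolding rep_def by (auto simp: not_less[symmetric])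
  then have fin: "finite {k. a k \<noteq> 0}" using finite_subset by blast
  have "(\<Sum>k<N. a k * bb ^ k) = (\<Sum>k\<in>{k. a k \<noteq> 0}. a k * bb ^ k)"
    by (rule sum.mono_neutral_right) (use sub in auto)
  then show ?thesis using r fin unfolding rep_def digit_rep_def by simp
qed

lemma digit_rep_rep: "digit_rep bb a z \<Longrightarrow> \<exists>N. rep a N z"
proof -
  assume d: "digit_rep bb a z"
  then have fin: "finite {k. a k \<noteq> 0}" unfolding digit_rep_def by simp
  obtain N where N: "{k. a k \<noteq> 0} \<subseteq> {..<N}" using finite_nat_bounded[OF fin] by blast
  have "(\<Sum>k<N. a k * bb ^ k) = (\<Sum>k\<in>{k. a k \<noteq> 0}. a k * bb ^ k)"
    by (rule sum.mono_neutral_right) (use N in auto)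
  moreover have "\<forall>k\<ge>N. a k = 0" using N by force
  ultimately have "rep a N z" using d unfolding rep_def digit_rep_def by simp
  then show ?thesis by blast
qed

lemma rep_mono: "rep a N z \<Longrightarrow> N \<le> M \<Longrightarrow> rep a M z"
proof -
  assume r: "rep a N z" and NM: "N \<le> M"
  have "(\<Sum>k<M. a k * bb ^ k) = (\<Sum>k<N. a k * bb ^ k)"
    by (rule sum.mono_neutral_right) (use r NM in \<open>auto simp: rep_def\<close>)
  then show ?thesis using r NM unfolding rep_def by simp
qed

lemma gi_digit: "d \<in> mu4_0 \<Longrightarrow> d \<in> carrier gauss_ring"
  unfolding mu4_0_def by (auto simp: gi_uminus)

lemma gi_sum: "finite A \<Longrightarrow> (\<And>k. k \<in> A \<Longrightarrow> f k \<in> carrier gauss_ring) \<Longrightarrow> sum f A \<in> carrier gauss_ring"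
  by (induct A rule: finite_induct) (auto intro: gi_add)

lemma bmult: "Complex (of_int p) (of_int q) * bb = Complex (of_int (p - 2 * q)) (of_int (2 * p + q))"
  by (simp add: complex_eq_iff)

lemma b_dvd: "w \<in> carrier gauss_ring \<Longrightarrow> Complex (of_int u) (of_int v) = bb * w \<Longrightarrow> (5::int) dvd (u + 2 * v)"
proof -
  assume w: "w \<in> carrier gauss_ring" and e: "Complex (of_int u) (of_int v) = bb * w"
  obtain p q where pq: "w = Complex (of_int p) (of_int q)" using w gauss_carrier by blast
  have "Complex (of_int u) (of_int v) = Complex (of_int (p - 2 * q)) (of_int (2 * p + q))"
    using e unfolding pq by (simp add: complex_eq_iff)
  then have "u = p - 2 * q" "v = 2 * p + q" by (simp_all only: complex.inject of_int_eq_iff)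
  then have "u + 2 * v = 5 * p" by simp
  then show ?thesis by simp
qed

lemma b_dvd_rev: "(5::int) dvd (u + 2 * v) \<Longrightarrow> \<exists>w\<in>carrier gauss_ring. Complex (of_int u) (of_int v) = bb * w
   \<and> 5 * (Re w ^ 2 + Im w ^ 2) = of_int u ^ 2 + of_int v ^ 2"
proof -
  assume "(5::int) dvd (u + 2 * v)"
  then obtain p where p: "u + 2 * v = 5 * p" by (auto simp: dvd_def)
  define q where "q = v - 2 * p"
  have u: "u = p - 2 * q" and v: "v = 2 * p + q" using p unfolding q_def by simp_all
  have "Complex (of_int u) (of_int v) = bb * Complex (of_int p) (of_int q)"
    unfolding u v by (simp add: complex_eq_iff)
  moreover have "5 * ((of_int p :: real) ^ 2 + of_int q ^ 2) = of_int u ^ 2 + of_int v ^ 2"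
    unfolding u v by (simp add: power2_eq_square algebra_simps)
  ultimately show ?thesis by (intro bexI[of _ "Complex (of_int p) (of_int q)"]) auto
qed

lemma key_digit: "d \<in> mu4_0 \<Longrightarrow> \<exists>x y::int. d = Complex (of_int x) (of_int y) \<and>
   ((x = 0 \<and> y = 0) \<or> (x = 1 \<and> y = 0) \<or> (x = 0 \<and> y = 1) \<or> (x = -1 \<and> y = 0) \<or> (x = 0 \<and> y = -1))"
  unfolding mu4_0_def
  apply (elim insertE)
  apply (rule exI[of _ 0], rule exI[of _ 0], simp add: complex_eq_iff)
  apply (rule exI[of _ 1], rule exI[of _ 0], simp add: complex_eq_iff)
  apply (rule exI[of _ 0], rule exI[of _ 1], simp add: complex_eq_iff)
  apply (rule exI[of _ "-1"], rule exI[of _ 0], simp add: complex_eq_iff)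
  apply (rule exI[of _ 0], rule exI[of _ "-1"], simp add: complex_eq_iff)
  apply simp
  done

lemma digit_uniq:
  assumes d: "d \<in> mu4_0" and d': "d' \<in> mu4_0" and w: "w \<in> carrier gauss_ring" and e: "d - d' = bb * w"
  shows "d = d'"
proof -
  obtain x y where xy: "d = Complex (of_int x) (of_int y)"
    "(x = 0 \<and> y = 0) \<or> (x = 1 \<and> y = 0) \<or> (x = 0 \<and> y = 1) \<or> (x = -1 \<and> y = 0) \<or> (x = 0 \<and> y = -1)"
    using key_digit[OF d] by blast
  obtain x' y' where xy': "d' = Complex (of_int x') (of_int y')"
    "(x' = 0 \<and> y' = 0) \<or> (x' = 1 \<and> y' = 0) \<or> (x' = 0 \<and> y' = 1) \<or> (x' = -1 \<and> y' = 0) \<or> (x' = 0 \<and> y' = -1)"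
    using key_digit[OF d'] by blast
  have "Complex (of_int (x - x')) (of_int (y - y')) = bb * w" using e unfolding xy xy' by (simp add: complex_eq_iff)
  then have "(5::int) dvd ((x - x') + 2 * (y - y'))" using b_dvd[OF w] by blast
  then have "x = x' \<and> y = y'" using xy(2) xy'(2) by (elim disjE conjE) simp_all
  then show ?thesis unfolding xy xy' by simp
qed


lemma sq_abs: "\<bar>u::int\<bar> \<le> u * u"
proof (cases "u = 0")
  case False then have "1 \<le> \<bar>u\<bar>" by simp
  then have "\<bar>u\<bar> * 1 \<le> \<bar>u\<bar> * \<bar>u\<bar>" by (intro mult_left_mono) auto
  then show ?thesis by (simp add: abs_mult[symmetric])
qed simp

lemma nbound: "(u::int) \<noteq> 0 \<or> v \<noteq> 0 \<Longrightarrow> 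
  (x = 0 \<and> y = 0) \<or> (x = 1 \<and> y = 0) \<or> (x = 0 \<and> y = 1) \<or> (x = -1 \<and> y = 0) \<or> (x = 0 \<and> y = -1) \<Longrightarrow>
  (u - x)^2 + (v - y)^2 < 5 * (u^2 + v^2)"
proof -
  assume nz: "u \<noteq> 0 \<or> v \<noteq> 0" and c: "(x = 0 \<and> y = 0) \<or> (x = 1 \<and> y = 0) \<or> (x = 0 \<and> y = 1) \<or> (x = -1 \<and> y = 0) \<or> (x = 0 \<and> y = -1)"
  have f: "\<bar>u\<bar> \<le> u * u" "\<bar>v\<bar> \<le> v * v" "1 \<le> \<bar>u\<bar> + \<bar>v\<bar>" using sq_abs nz by auto
  from c show ?thesis
    by (elim disjE conjE) (simp_all add: power2_eq_square algebra_simps, (use f in linarith)+)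
qed

lemma digit_of: "(x = 0 \<and> y = 0) \<or> (x = 1 \<and> y = 0) \<or> (x = 0 \<and> y = 1) \<or> (x = -1 \<and> y = 0) \<or> (x = 0 \<and> y = -1) \<Longrightarrow>
  Complex (of_int x) (of_int y) \<in> mu4_0"
  unfolding mu4_0_def by (elim disjE conjE) (simp_all add: complex_eq_iff)

lemma step:
  "\<exists>x y w. ((x = 0 \<and> y = 0) \<or> (x = 1 \<and> y = 0) \<or> (x = 0 \<and> y = 1) \<or> (x = -1 \<and> y = 0) \<or> (x = 0 \<and> y = -1))
     \<and> w \<in> carrier gauss_ring \<and> Complex (of_int u) (of_int v) = Complex (of_int x) (of_int y) + bb * w
     \<and> 5 * (Re w ^ 2 + Im w ^ 2) = of_int (u - x) ^ 2 + of_int (v - y) ^ 2"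
proof -
  have "\<exists>x y. ((x = 0 \<and> y = 0) \<or> (x = 1 \<and> y = 0) \<or> (x = 0 \<and> y = 1) \<or> (x = -1 \<and> y = 0) \<or> (x = 0 \<and> y = -1))
     \<and> (5::int) dvd ((u - x) + 2 * (v - y))"
  proof -
    define r where "r = (u + 2 * v) mod 5"
    have d: "(5::int) dvd (u + 2 * v - r)" unfolding r_def by (simp add: mod_eq_dvd_iff)
    have "r = 0 \<or> r = 1 \<or> r = 2 \<or> r = 3 \<or> r = 4" unfolding r_def by auto
    then show ?thesis
    proof (elim disjE)
      assume "r = 0" then show ?thesis using d by (intro exI[of _ 0] exI[of _ 0]) simp
    next
      assume "r = 1" then show ?thesis using d by (intro exI[of _ 1] exI[of _ 0]) (simp add: algebra_simps)
    next
      assume "r = 2" then show ?thesis using d by (intro exI[of _ 0] exI[of _ 1]) (simp add: algebra_simps)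
    next
      assume "r = 3"
      then have "(5::int) dvd (u + 2 * v - 3)" using d by simp
      then have "(5::int) dvd (u + 2 * v - 3 + 5)" by (metis dvd_add dvd_refl)
      then show ?thesis by (intro exI[of _ 0] exI[of _ "-1"]) (simp add: algebra_simps)
    next
      assume "r = 4"
      then have "(5::int) dvd (u + 2 * v - 4)" using d by simp
      then have "(5::int) dvd (u + 2 * v - 4 + 5)" by (metis dvd_add dvd_refl)
      then show ?thesis by (intro exI[of _ "-1"] exI[of _ 0]) (simp add: algebra_simps)
    qed
  qed
  then obtain x y where xy: "(x = 0 \<and> y = 0) \<or> (x = 1 \<and> y = 0) \<or> (x = 0 \<and> y = 1) \<or> (x = -1 \<and> y = 0) \<or> (x = 0 \<and> y = -1)"
     "(5::int) dvd ((u - x) + 2 * (v - y))" by blast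
  obtain w where w: "w \<in> carrier gauss_ring" "Complex (of_int (u - x)) (of_int (v - y)) = bb * w"
    "5 * (Re w ^ 2 + Im w ^ 2) = of_int (u - x) ^ 2 + of_int (v - y) ^ 2"
    using b_dvd_rev[OF xy(2)] by blast
  have "Complex (of_int u) (of_int v) = Complex (of_int x) (of_int y) + bb * w"
    using w(2) by (simp add: complex_eq_iff)
  then show ?thesis using xy(1) w(1) w(3) by blast
qed

lemma sum_shift: "(\<Sum>k<Suc N. f k * c ^ k) = f 0 + (c::complex) * (\<Sum>k<N. f (Suc k) * c ^ k)"
  unfolding sum.lessThan_Suc_shift by (simp add: sum_distrib_left mult.left_commute)

lemma existence: "z \<in> carrier gauss_ring \<Longrightarrow> \<exists>a N. rep a N z"
proof -
  have main: "\<forall>u v. nat (u ^ 2 + v ^ 2) = n \<longrightarrow> (\<exists>a N. rep a N (Complex (of_int u) (of_int v)))" for n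
  proof (induct n rule: less_induct)
    case (less n)
    show ?case
    proof (intro allI impI)
      fix u v :: int assume n: "nat (u ^ 2 + v ^ 2) = n"
      show "\<exists>a N. rep a N (Complex (of_int u) (of_int v))"
      proof (cases "u = 0 \<and> v = 0")
        case True
        then have "rep (\<lambda>_. 0) 0 (Complex (of_int u) (of_int v))"
          unfolding rep_def mu4_0_def by (simp add: complex_eq_iff)
        then show ?thesis by blast
      next
        case False
        obtain x y w where xyw: "(x = 0 \<and> y = 0) \<or> (x = 1 \<and> y = 0) \<or> (x = 0 \<and> y = 1) \<or> (x = -1 \<and> y = 0) \<or> (x = 0 \<and> y = -1)"
          "w \<in> carrier gauss_ring" "Complex (of_int u) (of_int v) = Complex (of_int x) (of_int y) + bb * w"
          "5 * (Re w ^ 2 + Im w ^ 2) = of_int (u - x) ^ 2 + of_int (v - y) ^ 2"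
          using step[of u v] by blast
        obtain p q where pq: "w = Complex (of_int p) (of_int q)" using xyw(2) gauss_carrier by blast
        have "(of_int (5 * (p ^ 2 + q ^ 2)) :: real) = of_int ((u - x) ^ 2 + (v - y) ^ 2)"
          using xyw(4) unfolding pq by simp
        then have "5 * (p ^ 2 + q ^ 2) = (u - x) ^ 2 + (v - y) ^ 2"
          by (simp only: of_int_eq_iff)
        also have "\<dots> < 5 * (u ^ 2 + v ^ 2)"
        proof -
          have nz: "u \<noteq> 0 \<or> v \<noteq> 0" using False by simp
          show ?thesis by (rule nbound[OF nz xyw(1)])
        qed
        finally have lt: "p ^ 2 + q ^ 2 < u ^ 2 + v ^ 2" by simp
        have nn: "0 \<le> p ^ 2 + q ^ 2" by (simp add: add_nonneg_nonneg)
        have lt': "nat (p ^ 2 + q ^ 2) < n" using lt n nat_less_eq_zless[OF nn, of "u ^ 2 + v ^ 2"] by metis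
        have "\<exists>a N. rep a N (Complex (of_int p) (of_int q))"
          using less(1)[OF lt', rule_format, of p q] by simp
        then obtain a N where aN: "rep a N (Complex (of_int p) (of_int q))" by blast
        define a' where "a' k = (case k of 0 \<Rightarrow> Complex (of_int x) (of_int y) | Suc j \<Rightarrow> a j)" for k
        have "rep a' (Suc N) (Complex (of_int u) (of_int v))"
          unfolding rep_def
        proof (intro conjI allI impI)
          fix k show "a' k \<in> mu4_0" unfolding a'_def using aN digit_of[OF xyw(1)]
            by (cases k) (auto simp: rep_def)
        next
          fix k assume "Suc N \<le> k" then show "a' k = 0" unfolding a'_def using aN
            by (cases k) (auto simp: rep_def)
        next
          have "(\<Sum>k<Suc N. a' k * bb ^ k) = a' 0 + bb * (\<Sum>k<N. a' (Suc k) * bb ^ k)"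
            by (rule sum_shift)
          also have "\<dots> = Complex (of_int x) (of_int y) + bb * (\<Sum>k<N. a k * bb ^ k)"
            unfolding a'_def by simp
          also have "\<dots> = Complex (of_int u) (of_int v)" using aN xyw(3) pq by (simp add: rep_def)
          finally show "Complex (of_int u) (of_int v) = (\<Sum>k<Suc N. a' k * bb ^ k)" by simp
        qed
        then show ?thesis by blast
      qed
    qed
  qed
  assume "z \<in> carrier gauss_ring"
  then obtain u v where "z = Complex (of_int u) (of_int v)" using gauss_carrier by blast
  then show ?thesis using main by blast
qed

lemma uniqueness: "rep a N z \<Longrightarrow> rep a' N z \<Longrightarrow> a = a'"
proof (induct N arbitrary: a a' z)
  case 0 then show ?case by (auto simp: rep_def)
next
  case (Suc N)
  define S where "S = (\<Sum>k<N. a (Suc k) * bb ^ k)"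
  define S' where "S' = (\<Sum>k<N. a' (Suc k) * bb ^ k)"
  have dig: "\<And>k. a k \<in> mu4_0" "\<And>k. a' k \<in> mu4_0" using Suc.prems by (auto simp: rep_def)
  have Sc: "S \<in> carrier gauss_ring" "S' \<in> carrier gauss_ring" unfolding S_def S'_def
    by (intro gi_sum gi_mult gi_power gi_b gi_digit dig; simp)+
  have ez: "z = a 0 + bb * S" "z = a' 0 + bb * S'"
    using Suc.prems unfolding rep_def S_def S'_def sum_shift by simp_all
  have "a 0 - a' 0 = bb * (S' - S)" using ez by (simp add: algebra_simps)
  then have a0: "a 0 = a' 0" using digit_uniq[OF dig(1) dig(2) gi_diff[OF Sc(2) Sc(1)]] by blast
  then have "bb * S = bb * S'" using ez by (metis add_left_cancel)
  moreover have bnz: "bb \<noteq> 0" by (simp add: complex_eq_iff)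
  ultimately have SS: "S = S'" by (metis mult_left_cancel)
  have "rep (\<lambda>k. a (Suc k)) N S" using Suc.prems unfolding rep_def S_def by auto
  moreover have "rep (\<lambda>k. a' (Suc k)) N S" using Suc.prems SS S'_def unfolding rep_def by auto
  ultimately
  have "(\<lambda>k. a (Suc k)) = (\<lambda>k. a' (Suc k))" using Suc.hyps by blast
  then show ?case using a0 by (metis not0_implies_Suc ext)
qed

lemma part_i: "z \<in> carrier gauss_ring \<Longrightarrow> \<exists>!a. digit_rep bb a z"
proof -
  assume z: "z \<in> carrier gauss_ring"
  obtain a N where "rep a N z" using existence[OF z] by blast
  then have ex: "digit_rep bb a z" by (rule rep_digit_rep)
  show ?thesis
  proof (rule ex1I[of _ a])
    show "digit_rep bb a z" by (rule ex)
  next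
    fix a' assume "digit_rep bb a' z"
    then obtain N' where N': "rep a' N' z" using digit_rep_rep by blast
    obtain N where N: "rep a N z" using digit_rep_rep ex by blast
    have "rep a (max N N') z" "rep a' (max N N') z" using rep_mono N N' by auto
    then show "a' = a" using uniqueness by metis
  qed
qed


lemma digits_eq: "z \<in> carrier gauss_ring \<Longrightarrow> rep f N z \<Longrightarrow> digits bb z = f"
  unfolding digits_def using part_i rep_digit_rep the1_equality by blast

theorem proposition6p10:
  fixes b :: complex
  assumes X_def: "b = 1 + 2 * imaginary_unit"
  shows "(\<forall>z \<in> carrier gauss_ring. \<exists>!a. digit_rep b a z)
    \<and> digits b (0 + 1) = (\<lambda>_. 0)(0 := 1)
    \<and> digits b (1 + 1) = (\<lambda>_. 0)(0 := imaginary_unit, 1 := -imaginary_unit)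
    \<and> digits b (imaginary_unit + 1) = (\<lambda>_. 0)(0 := -imaginary_unit, 1 := 1)
    \<and> digits b (-imaginary_unit + 1) = (\<lambda>_. 0)(0 := -1, 1 := -imaginary_unit)
    \<and> digits b (-1 + 1) = (\<lambda>_. 0)
    \<and> field (R_m b 1) \<and> R_m b 1 \<simeq> ZFact 5
    \<and> invlim gauss_ring (\<lambda>m. PIdl\<^bsub>gauss_ring\<^esub> (b ^ m)) \<simeq> Z5
    \<and> (\<forall>m\<ge>1. R_m b m \<simeq> Z5 Quot (PIdl\<^bsub>Z5\<^esub> (Z5_of_int (5 ^ m))))"
proof -
  have c1: "(0 + 1 :: complex) \<in> carrier gauss_ring" "(1 + 1 :: complex) \<in> carrier gauss_ring"
    "(\<i> + 1 :: complex) \<in> carrier gauss_ring" "(- \<i> + 1 :: complex) \<in> carrier gauss_ring"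
    "(- 1 + 1 :: complex) \<in> carrier gauss_ring"
    by (simp_all add: gauss_ring_def)
  have d1: "digits bb (0 + 1) = (\<lambda>_. 0)(0 := 1)"
    by (rule digits_eq[OF c1(1), of _ 2]) (auto simp: rep_def mu4_0_def numeral_2_eq_2)
  have d2: "digits bb (1 + 1) = (\<lambda>_. 0)(0 := \<i>, 1 := -\<i>)"
    by (rule digits_eq[OF c1(2), of _ 2]) (auto simp: rep_def mu4_0_def numeral_2_eq_2 complex_eq_iff)
  have d3: "digits bb (\<i> + 1) = (\<lambda>_. 0)(0 := -\<i>, 1 := 1)"
    by (rule digits_eq[OF c1(3), of _ 2]) (auto simp: rep_def mu4_0_def numeral_2_eq_2 complex_eq_iff)
  have d4: "digits bb (- \<i> + 1) = (\<lambda>_. 0)(0 := -1, 1 := -\<i>)"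
    by (rule digits_eq[OF c1(4), of _ 2]) (auto simp: rep_def mu4_0_def numeral_2_eq_2 complex_eq_iff)
  have d5: "digits bb (- 1 + 1) = (\<lambda>_. 0)"
    by (rule digits_eq[OF c1(5), of _ 0]) (auto simp: rep_def mu4_0_def)
  have p5: "\<forall>m\<ge>1. R_m bb m \<simeq> Z5 Quot (PIdl\<^bsub>Z5\<^esub> (Z5_of_int (5 ^ m)))"
    unfolding R_m_def using part_v by blast
  have p3: "field (R_m bb 1)" "R_m bb 1 \<simeq> ZFact 5"
    unfolding R_m_def using part_iii part_iii_field by simp_all
  show ?thesis unfolding X_def using part_i d1 d2 d3 d4 d5 p3 p5 part_iv by blast
qed


end
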